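(* Let $M$ be a simple $\lambda$-term and $N$ a $\lambda$-term with $M \twoheadrightarrow_\beta N$. Then $N$ matches $M$ eventually, i.e. $\mathrm{BT}^c(M) =_{\mathrm{ev}} \mathrm{BT}^c(N)$.
   Context: Untyped $\lambda$-calculus modulo $\alpha$. Head reduction step: $\lambda x_1\ldots x_n.(\lambda y.P)QQ_1\ldots Q_m \to \lambda x_1\ldots x_n.P[y:=Q]Q_1\ldots Q_m$; hnf: $\lambda x_1\ldots x_n.\,yQ_1\ldots Q_m$. Clocked Böhm tree $\mathrm{BT}^c(M)$: $\bot$ if $M$ has no hnf; otherwise if $M\to_h^k \lambda x_1\ldots x_n.\,yM_1\ldots M_m$ is the head reduction to hnf, $\mathrm{BT}^c(M)$ is $\lambda x_1\ldots x_n.\,y\,\mathrm{BT}^c(M_1)\ldots\mathrm{BT}^c(M_m)$ with root annotated by $k$ (coinductive definition). Positions: sequences over $\{0,1,2\}$ ($0$ abstraction body, $1$ function, $2$ argument). $T_1 =_{\mathrm{ev}} T_2$ means $T_1,T_2$ coincide after erasing annotations and there is $\ell\in\mathbb N$ such that for all positions $p$ of $T_1$ with $|p|\ge \ell$, either neither subtree at $p$ has a root annotation or both have equal root annotations. A redex $(\lambda x.P)Q$ is linear if $x$ occurs at most once in $P$, call-by-value if $Q$ is a $\beta$-normal form, and simple if it is linear or call-by-value. The set of simple terms is the largest set $X$ of $\lambda$-terms such that every $M\in X$ either has no hnf, or its head reduction to hnf $M \to_h^* \lambda x_1\ldots x_n.\,yM_1\ldots M_m$ contracts only simple redexes and $M_1,\dots,M_m\in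 X$. *)

theory Defs
  imports Main
begin

datatype dB = Var nat | App dB dB | Abs dB

primrec lift :: "dB \<Rightarrow> nat \<Rightarrow> dB" where
  "lift (Var i) k = (if i < k then Var i else Var (i + 1))"
| "lift (App s t) k = App (lift s k) (lift t k)"
| "lift (Abs s) k = Abs (lift s (k + 1))"

primrec subst :: "dB \<Rightarrow> dB \<Rightarrow> nat \<Rightarrow> dB" where
  "subst (Var i) s k = (if k < i then Var (i - 1) else if i = k then s else Var i)"
| "subst (App t u) s k = App (subst t s k) (subst u s k)"
| "subst (Abs t) s k = Abs (subst t (lift s 0) (k + 1))"

inductive beta :: "dB \<Rightarrow> dB \<Rightarrow> bool" where
  beta_redex: "beta (App (Abs s) t) (subst s t 0)"
| appL: "beta s t \<Longrightarrow> beta (App s u) (App t u)"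
| appR: "beta s t \<Longrightarrow> beta (App u s) (App u t)"
| abs: "beta s t \<Longrightarrow> beta (Abs s) (Abs t)"

abbreviation beta_reds :: "dB \<Rightarrow> dB \<Rightarrow> bool" where
  "beta_reds \<equiv> beta\<^sup>*\<^sup>*"

definition beta_nf :: "dB \<Rightarrow> bool" where
  "beta_nf Q \<longleftrightarrow> \<not> (\<exists>N. beta Q N)"

fun is_abs :: "dB \<Rightarrow> bool" where
  "is_abs (Abs _) = True"
| "is_abs _ = False"

inductive hstep_r :: "dB \<times> dB \<Rightarrow> dB \<Rightarrow> dB \<Rightarrow> bool" where
  "hstep_r (P, Q) (App (Abs P) Q) (subst P Q 0)"
| "hstep_r r M M' \<Longrightarrow> \<not> is_abs M \<Longrightarrow> hstep_r r (App M N) (App M' N)"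
| "hstep_r r M M' \<Longrightarrow> hstep_r r (Abs M) (Abs M')"

inductive hpath :: "(dB \<times> dB) list \<Rightarrow> dB \<Rightarrow> dB \<Rightarrow> bool" where
  "hpath [] M M"
| "hstep_r r M M' \<Longrightarrow> hpath rs M' M'' \<Longrightarrow> hpath (r # rs) M M''"

fun strip_abs :: "dB \<Rightarrow> nat \<times> dB" where
  "strip_abs (Abs t) = (let (n, b) = strip_abs t in (Suc n, b))"
| "strip_abs t = (0, t)"

fun head_args :: "dB \<Rightarrow> dB \<times> dB list" where
  "head_args (App s t) = (let (h, as) = head_args s in (h, as @ [t]))"
| "head_args t = (t, [])"

text \<open>Head normal form: \<lambda>x1..xn. y Q1 .. Qm\<close>
definition hnf :: "dB \<Rightarrow> bool" where
  "hnf N \<longleftrightarrow> (\<exists>y. fst (head_args (snd (strip_abs N))) = Var y)"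

definition has_hnf :: "dB \<Rightarrow> bool" where
  "has_hnf M \<longleftrightarrow> (\<exists>N. beta_reds M N \<and> hnf N)"

definition hnf_steps :: "dB \<Rightarrow> nat" where
  "hnf_steps M = (LEAST k. \<exists>rs N. hpath rs M N \<and> hnf N \<and> length rs = k)"

definition hnf_of :: "dB \<Rightarrow> dB" where
  "hnf_of M = (SOME N. \<exists>rs. hpath rs M N \<and> hnf N)"

definition hnf_nabs :: "dB \<Rightarrow> nat" where
  "hnf_nabs M = fst (strip_abs (hnf_of M))"

definition hnf_head :: "dB \<Rightarrow> nat" where
  "hnf_head M = (case fst (head_args (snd (strip_abs (hnf_of M)))) of Var y \<Rightarrow> y | _ \<Rightarrow> 0)"

definition hnf_args :: "dB \<Rightarrow> dB list" where
  "hnf_args M = snd (head_args (snd (strip_abs (hnf_of M))))"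

text \<open>A Boehm-tree node Nd a n y ts stands for \<lambda>x1..xn. y T1 .. Tm (ts = [T1..Tm]),
  with root annotation a; Bot is the unannotated leaf \<bottom>.\<close>
codatatype 'a bt = Bot | Nd 'a nat nat "'a bt list"

primcorec bt_c :: "dB \<Rightarrow> nat bt" where
  "bt_c M = (if has_hnf M
     then Nd (hnf_steps M) (hnf_nabs M) (hnf_head M) (map bt_c (hnf_args M))
     else Bot)"

definition erase :: "'a bt \<Rightarrow> unit bt" where
  "erase T = map_bt (\<lambda>_. ()) T"

text \<open>Root annotation of the subtree at position p (over {0,1,2}, 0 = abstraction body,
  1 = function, 2 = argument) of the tree, viewing Nd a n y [T1..Tm] as the
  term-tree \<lambda>x1..xn. (..((y T1) T2)..) Tm. None if p is not a position or
  the subtree at p carries no root annotation.\<close>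
function ann_at :: "'a bt \<Rightarrow> nat list \<Rightarrow> 'a option"
and spine_at :: "nat \<Rightarrow> 'a bt list \<Rightarrow> nat list \<Rightarrow> 'a option" where
  "ann_at Bot p = None"
| "ann_at (Nd a n y ts) [] = Some a"
| "ann_at (Nd a n y ts) (d # p) = spine_at n ts (d # p)"
| "spine_at n ts [] = None"
| "spine_at (Suc n) ts (d # p) = (if d = 0 then spine_at n ts p else None)"
| "spine_at 0 ts (d # p) =
     (if ts = [] then None
      else if d = 1 then spine_at 0 (butlast ts) p
      else if d = 2 then ann_at (last ts) p
      else None)"
  by pat_completeness auto
termination
  by (relation "measure (\<lambda>x. case x of Inl (t, p) \<Rightarrow> 2 * length p + 1
                                    | Inr (n, ts, p) \<Rightarrow> 2 * length p)") auto

definition ev_eq :: "'a bt \<Rightarrow> 'a bt \<Rightarrow> bool" where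
  "ev_eq T1 T2 \<longleftrightarrow> erase T1 = erase T2 \<and>
     (\<exists>l. \<forall>p. length p \<ge> l \<longrightarrow> ann_at T1 p = ann_at T2 p)"

primrec occ :: "nat \<Rightarrow> dB \<Rightarrow> nat" where
  "occ i (Var j) = (if i = j then 1 else 0)"
| "occ i (App s t) = occ i s + occ i t"
| "occ i (Abs t) = occ (Suc i) t"

definition linear_redex :: "dB \<times> dB \<Rightarrow> bool" where
  "linear_redex r \<longleftrightarrow> occ 0 (fst r) \<le> 1"

definition cbv_redex :: "dB \<times> dB \<Rightarrow> bool" where
  "cbv_redex r \<longleftrightarrow> beta_nf (snd r)"

definition simple_redex :: "dB \<times> dB \<Rightarrow> bool" where
  "simple_redex r \<longleftrightarrow> linear_redex r \<or> cbv_redex r"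

coinductive simple_term :: "dB \<Rightarrow> bool" where
  "\<not> has_hnf M \<Longrightarrow> simple_term M"
| "hpath rs M N \<Longrightarrow> hnf N \<Longrightarrow> (\<forall>r\<in>set rs. simple_redex r) \<Longrightarrow>
   (\<forall>A\<in>set (snd (head_args (snd (strip_abs N)))). simple_term A) \<Longrightarrow> simple_term M"

end

theory Submission
  imports Defs
begin



lemma lift_lift:
  "i < k + 1 \<Longrightarrow> lift (lift t i) (Suc k) = lift (lift t k) i"
  by (induct t arbitrary: i k) auto

lemma lift_subst [simp]:
  "j < i + 1 \<Longrightarrow> lift (subst t s j) i = subst (lift t (i + 1)) (lift s i) j"
  by (induct t arbitrary: i j s) (simp_all add: diff_Suc lift_lift split: nat.split)

lemma lift_subst_lt:
  "i < j + 1 \<Longrightarrow> lift (subst t s j) i = subst (lift t i) (lift s i) (j + 1)"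
  by (induct t arbitrary: i j s) (auto simp: lift_lift)

lemma subst_lift [simp]: "subst (lift t k) s k = t"
  by (induct t arbitrary: k s) simp_all

lemma subst_subst:
  "i < j + 1 \<Longrightarrow> subst (subst t (lift v i) (Suc j)) (subst u v j) i = subst (subst t u i) v j"
  by (induct t arbitrary: i j u v)
    (simp_all add: diff_Suc subst_lift lift_lift [symmetric] lift_subst_lt split: nat.split)

lemma beta_lift: "beta s t \<Longrightarrow> beta (lift s i) (lift t i)"
  by (induct arbitrary: i rule: beta.induct) (auto intro: beta.intros simp: lift_subst_lt[of 0, simplified])

lemma subst_preserves_beta: "beta r s \<Longrightarrow> beta (subst r t i) (subst s t i)"
proof (induct arbitrary: t i rule: beta.induct)
  case (beta_redex s u)
  show ?case using beta.beta_redex[of "subst s (lift t 0) (Suc i)" "subst u t i"]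
    by (simp add: subst_subst[of 0, simplified, symmetric])
qed (auto intro: beta.intros)

lemma occ0_subst: "occ k P = 0 \<Longrightarrow> subst P Q k = subst P Q' k"
  by (induct P arbitrary: k Q Q') auto

lemma occ1_subst: "occ k P = 1 \<Longrightarrow> beta Q Q' \<Longrightarrow> beta (subst P Q k) (subst P Q' k)"
proof (induct P arbitrary: k Q Q')
  case (App s t)
  then show ?case
  proof (cases "occ k s")
    case 0
    then have "subst s Q k = subst s Q' k" by (rule occ0_subst)
    with 0 App show ?thesis by (auto intro: beta.intros)
  next
    case (Suc n)
    then have "occ k t = 0" using App by simp
    then have "subst t Q k = subst t Q' k" by (rule occ0_subst)
    with Suc App show ?thesis by (auto intro: beta.intros)
  qed
next
  case (Abs P)
  then show ?case by (simp add: beta.abs beta_lift)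
qed (auto intro: beta.intros)

definition absn :: "nat \<Rightarrow> dB \<Rightarrow> dB" where "absn n t = (Abs ^^ n) t"
definition apps :: "dB \<Rightarrow> dB list \<Rightarrow> dB" where "apps h As = foldl App h As"
definition mk :: "nat \<Rightarrow> nat \<Rightarrow> dB list \<Rightarrow> dB" where "mk n y As = absn n (apps (Var y) As)"
definition mkR :: "nat \<Rightarrow> dB \<Rightarrow> dB \<Rightarrow> dB list \<Rightarrow> dB" where
  "mkR n P Q As = absn n (apps (App (Abs P) Q) As)"
definition mkC :: "nat \<Rightarrow> dB \<Rightarrow> dB \<Rightarrow> dB list \<Rightarrow> dB" where
  "mkC n P Q As = absn n (apps (subst P Q 0) As)"

lemma absn_0 [simp]: "absn 0 t = t" by (simp add: absn_def)
lemma absn_Suc [simp]: "absn (Suc n) t = Abs (absn n t)" by (simp add: absn_def)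
lemma apps_Nil [simp]: "apps h [] = h" by (simp add: apps_def)
lemma apps_Cons [simp]: "apps h (a # As) = apps (App h a) As" by (simp add: apps_def)
lemma apps_snoc [simp]: "apps h (As @ [a]) = App (apps h As) a" by (simp add: apps_def)

lemma apps_not_abs: "\<not> is_abs h \<Longrightarrow> \<not> is_abs (apps h As)"
  by (induct As rule: rev_induct) auto

lemma strip_abs_absn: "\<not> is_abs t \<Longrightarrow> strip_abs (absn n t) = (n, t)"
  by (induct n) (cases t; auto)+

lemma head_args_apps: "head_args (apps h As) = (fst (head_args h), snd (head_args h) @ As)"
  by (induct As rule: rev_induct) (auto split: prod.splits)

lemma strip_abs_recon: "t = absn (fst (strip_abs t)) (snd (strip_abs t)) \<and> \<not> is_abs (snd (strip_abs t))"
  by (induct t rule: strip_abs.induct) (auto split: prod.splits)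

lemma head_args_recon: "t = apps (fst (head_args t)) (snd (head_args t))"
  by (induct t rule: head_args.induct) (auto split: prod.splits)

lemma hnf_mk: "hnf (mk n y As)"
  by (simp add: hnf_def mk_def strip_abs_absn apps_not_abs head_args_apps)

lemma mk_data: "strip_abs (mk n y As) = (n, apps (Var y) As)"
  "head_args (apps (Var y) As) = (Var y, As)"
  by (simp_all add: mk_def strip_abs_absn apps_not_abs head_args_apps)

lemma hnf_E: "hnf H \<Longrightarrow> \<exists>n y As. H = mk n y As"
proof -
  assume "hnf H"
  then obtain y where y: "fst (head_args (snd (strip_abs H))) = Var y" by (auto simp: hnf_def)
  have "H = absn (fst (strip_abs H)) (snd (strip_abs H))" using strip_abs_recon by blast
  also have "snd (strip_abs H) = apps (Var y) (snd (head_args (snd (strip_abs H))))"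
    using head_args_recon y by metis
  finally show ?thesis unfolding mk_def by blast
qed

lemma not_hnf_mkR: "\<not> hnf (mkR n P Q As)"
  by (simp add: hnf_def mkR_def strip_abs_absn apps_not_abs head_args_apps)

lemma hstep_form: "hstep_r r M M' \<Longrightarrow> \<exists>n P Q As. M = mkR n P Q As \<and> M' = mkC n P Q As \<and> r = (P, Q)"
proof (induct rule: hstep_r.induct)
  case (1 P Q)
  then show ?case by (rule exI[of _ 0], rule exI[of _ P], rule exI[of _ Q], rule exI[of _ "[]"])
      (simp add: mkR_def mkC_def)
next
  case (2 r M M' N)
  then obtain n P Q As where h: "M = mkR n P Q As" "M' = mkC n P Q As" "r = (P, Q)" by blast
  with 2 have "n = 0" by (cases n) (auto simp: mkR_def)
  with h show ?case
    by (intro exI[of _ 0] exI[of _ P] exI[of _ Q] exI[of _ "As @ [N]"]) (simp add: mkR_def mkC_def)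
next
  case (3 r M M')
  then obtain n P Q As where h: "M = mkR n P Q As" "M' = mkC n P Q As" "r = (P, Q)" by blast
  then show ?case
    by (intro exI[of _ "Suc n"] exI[of _ P] exI[of _ Q] exI[of _ As]) (simp add: mkR_def mkC_def)
qed

lemma hstep_mkR: "hstep_r (P, Q) (mkR n P Q As) (mkC n P Q As)"
proof (induct n)
  case 0
  show ?case unfolding mkR_def mkC_def absn_0
  proof (induct As rule: rev_induct)
    case Nil then show ?case by (simp add: hstep_r.intros)
  next
    case (snoc a As)
    have "\<not> is_abs (apps (App (Abs P) Q) As)" by (rule apps_not_abs) simp
    with snoc show ?case by (simp add: hstep_r.intros)
  qed
next
  case (Suc n) then show ?case by (simp add: mkR_def mkC_def hstep_r.intros)
qed

lemma hnf_no_hstep: "hnf M \<Longrightarrow> \<not> hstep_r r M M'"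
  using hstep_form not_hnf_mkR by blast

lemma hstep_det: "hstep_r r M M1 \<Longrightarrow> hstep_r r' M M2 \<Longrightarrow> r = r' \<and> M1 = M2"
proof (induct arbitrary: r' M2 rule: hstep_r.induct)
  case (1 P Q)
  from 1 show ?case
    by (cases rule: hstep_r.cases) simp_all
next
  case (2 r M M' N)
  note ih = 2(2) and na = 2(3)
  from 2(4) show ?case
    apply (cases rule: hstep_r.cases)
    using na apply simp
    using ih apply blast
    done
next
  case (3 r M M')
  note ih = 3(2)
  from 3(3) show ?case
    apply (cases rule: hstep_r.cases)
    apply simp
    using ih apply blast
    done
qed

lemma hpath_det: "hpath rs M H \<Longrightarrow> hnf H \<Longrightarrow> hpath rs' M H' \<Longrightarrow> hnf H' \<Longrightarrow> rs = rs' \<and> H = H'"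
proof (induct arbitrary: rs' rule: hpath.induct)
  case (1 M)
  from 1(2) show ?case
  proof (cases rule: hpath.cases)
    case (2 r M' rs2)
    then have False using hnf_no_hstep 1(1) by blast
    then show ?thesis ..
  qed simp
next
  case (2 r M M' rs M'')
  note st = 2(1) and ih = 2(3) and h1 = 2(4)
  from 2(5) show ?case
  proof (cases rule: hpath.cases)
    case 1
    then have False using hnf_no_hstep 2(6) st by blast
    then show ?thesis ..
  next
    case (2 r2 M2 rs2)
    with st hstep_det have e: "r = r2" "M' = M2" by blast+
    with ih[OF h1, of rs2] 2 \<open>hnf H'\<close> show ?thesis by simp
  qed
qed


section \<open>Beta on shapes\<close>

lemma relpow_cong:
  assumes "\<And>x y. beta x y \<Longrightarrow> beta (f x) (f y)"
  shows "(beta ^^ k) x y \<Longrightarrow> (beta ^^ k) (f x) (f y)"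
proof (induct k arbitrary: y)
  case 0 then show ?case by simp
next
  case (Suc k)
  from Suc(2) obtain z where "(beta ^^ k) x z" "beta z y" by (rule relpowp_Suc_E)
  with Suc(1) assms show ?case by (meson relpowp_Suc_I)
qed

lemma beta_absn: "beta t t' \<Longrightarrow> beta (absn n t) (absn n t')"
  by (induct n) (auto intro: beta.abs)

lemma beta_apps_head: "beta X X' \<Longrightarrow> beta (apps X As) (apps X' As)"
  by (induct As arbitrary: X X') (auto intro: beta.appL)

lemma beta_apps_arg: "beta a b \<Longrightarrow> beta (apps (App X a) As) (apps (App X b) As)"
  by (rule beta_apps_head) (rule beta.appR)

lemma beta_absn_inv: "beta (absn n t) N \<Longrightarrow> \<exists>t'. N = absn n t' \<and> beta t t'"
proof (induct n arbitrary: N)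
  case (Suc n)
  from Suc(2) have "beta (Abs (absn n t)) N" by simp
  then obtain u where "N = Abs u" "beta (absn n t) u" by (cases rule: beta.cases) auto
  with Suc(1) show ?case by auto
qed simp

lemma beta_apps_inv:
  assumes "beta (apps h As) N" "\<not> is_abs h"
  shows "(\<exists>h'. beta h h' \<and> N = apps h' As) \<or> (\<exists>i B. i < length As \<and> beta (As ! i) B \<and> N = apps h (As[i := B]))"
  using assms
proof (induct As arbitrary: N rule: rev_induct)
  case Nil then show ?case by simp
next
  case (snoc a As)
  have na: "\<not> is_abs (apps h As)" using snoc(3) by (rule apps_not_abs)
  from snoc(2) have "beta (App (apps h As) a) N" by simp
  then show ?case
  proof (cases rule: beta.cases)
    case (beta_redex s) then show ?thesis using na by simp
  next
    case (appL t)
    from snoc(1)[OF appL(2) snoc(3)] show ?thesis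
    proof
      assume "\<exists>h'. beta h h' \<and> t = apps h' As"
      then show ?thesis using appL by auto
    next
      assume "\<exists>i B. i < length As \<and> beta (As ! i) B \<and> t = apps h (As[i := B])"
      then obtain i B where "i < length As" "beta (As ! i) B" "t = apps h (As[i := B])" by blast
      then show ?thesis using appL
        by (intro disjI2 exI[of _ i] exI[of _ B]) (simp add: nth_append list_update_append)
    qed
  next
    case (appR t)
    then show ?thesis
      by (intro disjI2 exI[of _ "length As"] exI[of _ t]) simp
  qed
qed

definition steps :: "nat list \<Rightarrow> dB list \<Rightarrow> dB list \<Rightarrow> bool" where
  "steps cs As Bs \<longleftrightarrow> length cs = length As \<and> length Bs = length As \<and>
     (\<forall>i<length As. (beta ^^ (cs ! i)) (As ! i) (Bs ! i))"

lemma steps_refl: "steps (replicate (length As) 0) As As"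
  by (simp add: steps_def)

lemma steps_apps: "steps cs As Bs \<Longrightarrow> (beta ^^ sum_list cs) (apps X As) (apps X Bs)"
proof (induct As arbitrary: X cs Bs)
  case Nil then show ?case by (simp add: steps_def)
next
  case (Cons a As)
  then obtain c cs' b Bs' where e: "cs = c # cs'" "Bs = b # Bs'"
    by (cases cs; cases Bs) (auto simp: steps_def)
  with Cons(2) have s1: "(beta ^^ c) a b" and s2: "steps cs' As Bs'"
    by (auto simp: steps_def)
  have "(beta ^^ c) (apps (App X a) As) (apps (App X b) As)"
    by (rule relpow_cong[OF _ s1]) (rule beta_apps_arg)
  moreover have "(beta ^^ sum_list cs') (apps (App X b) As) (apps (App X b) Bs')"
    using Cons(1)[OF s2] .
  ultimately show ?case using e by (simp add: relpowp_trans)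
qed

lemma steps_update:
  assumes "steps cs As Bs" "i < length As" "beta (Bs ! i) B"
  shows "steps (cs[i := Suc (cs ! i)]) As (Bs[i := B])"
  using assms unfolding steps_def
  by (auto simp: nth_list_update intro: relpowp_Suc_I)

lemma mk_reds:
  "(beta ^^ s) (mk n y As) N \<Longrightarrow> \<exists>Bs cs. steps cs As Bs \<and> sum_list cs = s \<and> N = mk n y Bs"
proof (induct s arbitrary: N)
  case 0 then show ?case using steps_refl[of As]
    by (intro exI[of _ As] exI[of _ "replicate (length As) 0"]) (auto simp: sum_list_replicate)
next
  case (Suc s)
  from Suc(2) obtain X where "(beta ^^ s) (mk n y As) X" "beta X N" by (rule relpowp_Suc_E)
  with Suc(1) obtain Bs cs where st: "steps cs As Bs" "sum_list cs = s" "X = mk n y Bs" by blast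
  with \<open>beta X N\<close> obtain t' where N: "N = absn n t'" "beta (apps (Var y) Bs) t'"
    using beta_absn_inv unfolding mk_def by blast
  from beta_apps_inv[OF N(2)] obtain i B where iB: "i < length Bs" "beta (Bs ! i) B"
    "t' = apps (Var y) (Bs[i := B])"
    by (auto elim: beta.cases)
  have l: "length Bs = length As" "length cs = length As" using st by (auto simp: steps_def)
  have "steps (cs[i := Suc (cs ! i)]) As (Bs[i := B])"
    by (rule steps_update) (use st iB l in auto)
  moreover have "sum_list (cs[i := Suc (cs ! i)]) = Suc s"
    using st iB l by (simp add: sum_list_update)
  ultimately show ?case using N iB unfolding mk_def by blast
qed


section \<open>Projection over a head step\<close>

lemma beta_mkR_inv:
  assumes "beta (mkR n P Q As) X"
  shows "X = mkC n P Q As \<or> (\<exists>P'. beta P P' \<and> X = mkR n P' Q As) \<or>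
    (\<exists>Q'. beta Q Q' \<and> X = mkR n P Q' As) \<or>
    (\<exists>i B. i < length As \<and> beta (As ! i) B \<and> X = mkR n P Q (As[i := B]))"
proof -
  from assms obtain t' where t': "X = absn n t'" "beta (apps (App (Abs P) Q) As) t'"
    using beta_absn_inv unfolding mkR_def by blast
  from beta_apps_inv[OF t'(2)] have "(\<exists>h'. beta (App (Abs P) Q) h' \<and> t' = apps h' As) \<or>
    (\<exists>i B. i < length As \<and> beta (As ! i) B \<and> t' = apps (App (Abs P) Q) (As[i := B]))" by simp
  then show ?thesis
  proof
    assume "\<exists>h'. beta (App (Abs P) Q) h' \<and> t' = apps h' As"
    then obtain h' where h: "beta (App (Abs P) Q) h'" "t' = apps h' As" by blast
    from h(1) show ?thesis
    proof (cases rule: beta.cases)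
      case beta_redex then show ?thesis using h t' by (simp add: mkC_def)
    next
      case (appL t)
      from appL(2) obtain P' where "t = Abs P'" "beta P P'" by (cases rule: beta.cases) auto
      then show ?thesis using appL h t' by (auto simp: mkR_def)
    next
      case (appR t)
      then show ?thesis using h t' by (auto simp: mkR_def)
    qed
  next
    assume "\<exists>i B. i < length As \<and> beta (As ! i) B \<and> t' = apps (App (Abs P) Q) (As[i := B])"
    then show ?thesis using t' by (auto simp: mkR_def)
  qed
qed

definition comp where
  "comp a b cs P Q As P' Q' As' \<longleftrightarrow> (beta ^^ a) P P' \<and> (beta ^^ b) Q Q' \<and> steps cs As As'"

lemma mkR_reds:
  "(beta ^^ s) (mkR n P Q As) N \<Longrightarrow>
    (\<exists>P' Q' As' a b cs. comp a b cs P Q As P' Q' As' \<and> a + b + sum_list cs = s \<and> N = mkR n P' Q' As') \<or>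
    (\<exists>P' Q' As' a b cs t. comp a b cs P Q As P' Q' As' \<and> a + b + sum_list cs + 1 + t = s \<and>
        (beta ^^ t) (mkC n P' Q' As') N)"
proof (induct s arbitrary: N)
  case 0
  then show ?case
    by (intro disjI1 exI[of _ P] exI[of _ Q] exI[of _ As] exI[of _ 0] exI[of _ 0]
        exI[of _ "replicate (length As) 0"]) (simp add: comp_def steps_refl sum_list_replicate)
next
  case (Suc s)
  from Suc(2) obtain X where X: "(beta ^^ s) (mkR n P Q As) X" "beta X N" by (rule relpowp_Suc_E)
  from Suc(1)[OF X(1)] show ?case
  proof
    assume "\<exists>P' Q' As' a b cs. comp a b cs P Q As P' Q' As' \<and> a + b + sum_list cs = s \<and> X = mkR n P' Q' As'"
    then obtain P' Q' As' a b cs where c: "comp a b cs P Q As P' Q' As'" "a + b + sum_list cs = s"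
      "X = mkR n P' Q' As'" by blast
    have l: "length cs = length As" "length As' = length As" using c by (auto simp: comp_def steps_def)
    from beta_mkR_inv[of n P' Q' As' N] X(2) c(3)
    consider "N = mkC n P' Q' As'" | P'' where "beta P' P''" "N = mkR n P'' Q' As'"
      | Q'' where "beta Q' Q''" "N = mkR n P' Q'' As'"
      | i B where "i < length As'" "beta (As' ! i) B" "N = mkR n P' Q' (As'[i := B])" by blast
    then show ?thesis
    proof cases
      case 1
      then show ?thesis using c by (intro disjI2 exI[of _ P'] exI[of _ Q'] exI[of _ As'] exI[of _ a]
            exI[of _ b] exI[of _ cs] exI[of _ 0]) simp
    next
      case (2 P'')
      then show ?thesis using c
        by (intro disjI1 exI[of _ P''] exI[of _ Q'] exI[of _ As'] exI[of _ "Suc a"]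
            exI[of _ b] exI[of _ cs]) (auto simp: comp_def intro: relpowp_Suc_I)
    next
      case (3 Q'')
      then show ?thesis using c
        by (intro disjI1 exI[of _ P'] exI[of _ Q''] exI[of _ As'] exI[of _ a]
            exI[of _ "Suc b"] exI[of _ cs]) (auto simp: comp_def intro: relpowp_Suc_I)
    next
      case (4 i B)
      have st: "steps (cs[i := Suc (cs ! i)]) As (As'[i := B])"
        by (rule steps_update) (use c 4 l in \<open>auto simp: comp_def\<close>)
      have "sum_list (cs[i := Suc (cs ! i)]) = Suc (sum_list cs)"
        using 4 l by (simp add: sum_list_update)
      then show ?thesis using c st 4
        by (intro disjI1 exI[of _ P'] exI[of _ Q'] exI[of _ "As'[i := B]"] exI[of _ a]
            exI[of _ b] exI[of _ "cs[i := Suc (cs ! i)]"]) (auto simp: comp_def)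
    qed
  next
    assume "\<exists>P' Q' As' a b cs t. comp a b cs P Q As P' Q' As' \<and> a + b + sum_list cs + 1 + t = s \<and>
        (beta ^^ t) (mkC n P' Q' As') X"
    then obtain P' Q' As' a b cs t where c: "comp a b cs P Q As P' Q' As'"
      "a + b + sum_list cs + 1 + t = s" "(beta ^^ t) (mkC n P' Q' As') X" by blast
    then show ?thesis using X(2)
      by (intro disjI2 exI[of _ P'] exI[of _ Q'] exI[of _ As'] exI[of _ a]
            exI[of _ b] exI[of _ cs] exI[of _ "Suc t"]) (auto intro: relpowp_Suc_I)
  qed
qed

lemma mkC_proj:
  assumes sr: "simple_redex (P, Q)" and c: "comp a b cs P Q As P' Q' As'"
  shows "\<exists>s'\<le>a + b + sum_list cs. (beta ^^ s') (mkC n P Q As) (mkC n P' Q' As')"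
proof -
  from c have a: "(beta ^^ a) P P'" and b: "(beta ^^ b) Q Q'" and cs: "steps cs As As'"
    by (auto simp: comp_def)
  have "\<exists>b'\<le>b. (beta ^^ b') (subst P Q 0) (subst P Q' 0)"
  proof (cases b)
    case 0 then show ?thesis using b by auto
  next
    case (Suc b0)
    with b obtain Q1 where "beta Q Q1" by (metis relpowp_Suc_D2)
    then have "\<not> beta_nf Q" by (auto simp: beta_nf_def)
    with sr have lin: "occ 0 P \<le> 1" by (auto simp: simple_redex_def cbv_redex_def linear_redex_def)
    show ?thesis
    proof (cases "occ 0 P = 0")
      case True
      then show ?thesis by (intro exI[of _ 0]) (simp add: occ0_subst[OF True, of Q Q'])
    next
      case False
      with lin have "occ 0 P = 1" by simp
      then have "(beta ^^ b) (subst P Q 0) (subst P Q' 0)"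
        by (intro relpow_cong[OF _ b]) (rule occ1_subst)
      then show ?thesis by blast
    qed
  qed
  then obtain b' where b': "b' \<le> b" "(beta ^^ b') (subst P Q 0) (subst P Q' 0)" by blast
  have "(beta ^^ a) (subst P Q' 0) (subst P' Q' 0)"
    by (intro relpow_cong[OF _ a]) (rule subst_preserves_beta)
  with b' have "(beta ^^ (b' + a)) (subst P Q 0) (subst P' Q' 0)" by (meson relpowp_trans)
  then have h: "(beta ^^ (b' + a)) (mkC n P Q As) (mkC n P' Q' As)"
    unfolding mkC_def by (intro relpow_cong[where f = "\<lambda>x. absn n (apps x As)"]) (auto intro: beta_absn beta_apps_head)
  have "(beta ^^ sum_list cs) (mkC n P' Q' As) (mkC n P' Q' As')"
    unfolding mkC_def by (intro relpow_cong[where f = "absn n"] steps_apps cs) (rule beta_absn)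
  with h have "(beta ^^ (b' + a + sum_list cs)) (mkC n P Q As) (mkC n P' Q' As')" by (meson relpowp_trans)
  then show ?thesis using b'(1) by (intro exI[of _ "b' + a + sum_list cs"]) simp
qed


lemma node:
  "hpath rs M H \<Longrightarrow> H = mk n y As \<Longrightarrow> \<forall>r\<in>set rs. simple_redex r \<Longrightarrow> (beta ^^ s) M N \<Longrightarrow>
   \<exists>rs' Bs cs. hpath rs' N (mk n y Bs) \<and> steps cs As Bs \<and> length rs' \<le> length rs \<and>
     sum_list cs + (length rs - length rs') \<le> s"
proof (induct arbitrary: s N rule: hpath.induct)
  case (1 M)
  then obtain Bs cs where "steps cs As Bs" "sum_list cs = s" "N = mk n y Bs" using mk_reds by blast
  then show ?case by (intro exI[of _ "[]"] exI[of _ Bs] exI[of _ cs]) (auto intro: hpath.intros)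
next
  case (2 r M M1 rs H)
  from hstep_form[OF 2(1)] obtain n0 P Q As0 where f: "M = mkR n0 P Q As0" "M1 = mkC n0 P Q As0" "r = (P, Q)"
    by blast
  have sr: "simple_redex (P, Q)" using 2(5) f by simp
  have srs: "\<forall>r\<in>set rs. simple_redex r" using 2(5) by simp
  from 2(6) f(1) have "(beta ^^ s) (mkR n0 P Q As0) N" by simp
  from mkR_reds[OF this] show ?case
  proof
    assume "\<exists>P' Q' As' a b cs. comp a b cs P Q As0 P' Q' As' \<and> a + b + sum_list cs = s \<and> N = mkR n0 P' Q' As'"
    then obtain P' Q' As' a b cs where c: "comp a b cs P Q As0 P' Q' As'" "a + b + sum_list cs = s"
      "N = mkR n0 P' Q' As'" by blast
    from mkC_proj[OF sr c(1), of n0] obtain s' where s': "s' \<le> s" "(beta ^^ s') M1 (mkC n0 P' Q' As')"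
      using c(2) f(2) by auto
    from 2(3)[OF 2(4) srs s'(2)] obtain rs' Bs cs' where
      ih: "hpath rs' (mkC n0 P' Q' As') (mk n y Bs)" "steps cs' As Bs" "length rs' \<le> length rs"
        "sum_list cs' + (length rs - length rs') \<le> s'" by blast
    have "hpath ((P', Q') # rs') N (mk n y Bs)"
      using c(3) ih(1) hstep_mkR[of P' Q' n0 As'] by (simp add: hpath.intros(2))
    then show ?thesis using ih s' by (intro exI[of _ "(P', Q') # rs'"] exI[of _ Bs] exI[of _ cs']) auto
  next
    assume "\<exists>P' Q' As' a b cs t. comp a b cs P Q As0 P' Q' As' \<and> a + b + sum_list cs + 1 + t = s \<and>
        (beta ^^ t) (mkC n0 P' Q' As') N"
    then obtain P' Q' As' a b cs t where c: "comp a b cs P Q As0 P' Q' As'" "a + b + sum_list cs + 1 + t = s"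
      "(beta ^^ t) (mkC n0 P' Q' As') N" by blast
    from mkC_proj[OF sr c(1), of n0] obtain s' where s': "s' \<le> a + b + sum_list cs" "(beta ^^ s') M1 (mkC n0 P' Q' As')"
      using f(2) by auto
    from s'(2) c(3) have "(beta ^^ (s' + t)) M1 N" by (meson relpowp_trans)
    from 2(3)[OF 2(4) srs this] obtain rs' Bs cs' where
      ih: "hpath rs' N (mk n y Bs)" "steps cs' As Bs" "length rs' \<le> length rs"
        "sum_list cs' + (length rs - length rs') \<le> s' + t" by blast
    then show ?thesis using s' c(2) by (intro exI[of _ rs'] exI[of _ Bs] exI[of _ cs']) auto
  qed
qed





lemma hstep_beta: "hstep_r r M M' \<Longrightarrow> beta M M'"
  by (induct rule: hstep_r.induct) (simp_all add: beta.beta_redex beta.appL beta.abs)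

lemma hpath_beta: "hpath rs M H \<Longrightarrow> beta_reds M H"
proof (induct rule: hpath.induct)
  case (2 r M M' rs M'')
  then show ?case by (meson converse_rtranclp_into_rtranclp hstep_beta)
qed simp

lemma hnf_facts:
  assumes p: "hpath rs M (mk n y As)"
  shows "has_hnf M" "hnf_steps M = length rs" "hnf_of M = mk n y As"
    "hnf_nabs M = n" "hnf_head M = y" "hnf_args M = As"
proof -
  have hm: "hnf (mk n y As)" by (rule hnf_mk)
  have uniq: "\<And>rs' N. hpath rs' M N \<Longrightarrow> hnf N \<Longrightarrow> rs = rs' \<and> mk n y As = N"
    by (rule hpath_det[OF p hm])
  show "has_hnf M" unfolding has_hnf_def by (intro exI[of _ "mk n y As"] conjI hpath_beta[OF p] hm)
  show "hnf_steps M = length rs"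
    unfolding hnf_steps_def
  proof (rule Least_equality)
    show "\<exists>rs' N. hpath rs' M N \<and> hnf N \<and> length rs' = length rs"
      by (intro exI[of _ rs] exI[of _ "mk n y As"] conjI p hm refl)
  next
    fix k assume "\<exists>rs' N. hpath rs' M N \<and> hnf N \<and> length rs' = k"
    then obtain rs' N where "hpath rs' M N" "hnf N" "length rs' = k" by blast
    with uniq show "length rs \<le> k" by simp
  qed
  have "\<exists>N. \<exists>rs'. hpath rs' M N \<and> hnf N"
    by (intro exI[of _ "mk n y As"] exI[of _ rs] conjI p hm)
  then have "\<exists>rs'. hpath rs' M (hnf_of M) \<and> hnf (hnf_of M)"
    unfolding hnf_of_def by (rule someI_ex)
  then obtain rs' where "hpath rs' M (hnf_of M)" "hnf (hnf_of M)" by blast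
  with uniq show h: "hnf_of M = mk n y As" by simp
  show "hnf_nabs M = n" "hnf_head M = y" "hnf_args M = As"
    by (simp_all add: hnf_nabs_def hnf_head_def hnf_args_def h mk_data)
qed

lemma simple_hnf:
  assumes "simple_term M" "has_hnf M"
  shows "\<exists>rs n y As. hpath rs M (mk n y As) \<and> (\<forall>r\<in>set rs. simple_redex r) \<and> (\<forall>A\<in>set As. simple_term A)"
  using assms(1)
proof (cases rule: simple_term.cases)
  case 1 then show ?thesis using assms(2) by simp
next
  case (2 rs N)
  from hnf_E[OF 2(2)] obtain n y As where N: "N = mk n y As" by blast
  then show ?thesis using 2 by (auto simp: mk_data)
qed

lemma NS:
  assumes "simple_term M" "(beta ^^ s) M N"
  shows "(\<not> has_hnf M \<and> \<not> has_hnf N) \<or>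
    (has_hnf M \<and> has_hnf N \<and> hnf_nabs N = hnf_nabs M \<and> hnf_head N = hnf_head M \<and>
     hnf_steps N \<le> hnf_steps M \<and>
     (\<exists>cs. steps cs (hnf_args M) (hnf_args N) \<and> sum_list cs + (hnf_steps M - hnf_steps N) \<le> s) \<and>
     (\<forall>A\<in>set (hnf_args M). simple_term A))"
proof (cases "has_hnf M")
  case False
  have "\<not> has_hnf N"
  proof
    assume "has_hnf N"
    then obtain H where "beta_reds N H" "hnf H" by (auto simp: has_hnf_def)
    moreover have "beta_reds M N" using assms(2) by (rule relpowp_imp_rtranclp)
    ultimately have "beta_reds M H" by (meson rtranclp_trans)
    with \<open>hnf H\<close> False show False by (auto simp: has_hnf_def)
  qed
  with False show ?thesis by simp
next
  case True
  from simple_hnf[OF assms(1) True] obtain rs n y As where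
    h: "hpath rs M (mk n y As)" "\<forall>r\<in>set rs. simple_redex r" "\<forall>A\<in>set As. simple_term A" by blast
  from node[OF h(1) refl h(2) assms(2)] obtain rs' Bs cs where
    n: "hpath rs' N (mk n y Bs)" "steps cs As Bs" "length rs' \<le> length rs"
      "sum_list cs + (length rs - length rs') \<le> s" by blast
  note f1 = hnf_facts[OF h(1)] and f2 = hnf_facts[OF n(1)]
  have "\<exists>cs. steps cs (hnf_args M) (hnf_args N) \<and> sum_list cs + (hnf_steps M - hnf_steps N) \<le> s"
    unfolding f1 f2 using n(2,4) by blast
  moreover have "hnf_steps N \<le> hnf_steps M" unfolding f1 f2 by (rule n(3))
  moreover have "\<forall>A\<in>set (hnf_args M). simple_term A" unfolding f1 by (rule h(3))
  ultimately show ?thesis using f1(1,4,5) f2(1,4,5) by simp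
qed

lemma erase_eq:
  assumes "simple_term M" "beta_reds M N"
  shows "erase (bt_c M) = erase (bt_c N)"
proof (rule bt.coinduct[where R = "\<lambda>X Y. \<exists>M N. X = erase (bt_c M) \<and> Y = erase (bt_c N) \<and> simple_term M \<and> beta_reds M N"])
  show "\<exists>M' N'. erase (bt_c M) = erase (bt_c M') \<and> erase (bt_c N) = erase (bt_c N') \<and> simple_term M' \<and> beta_reds M' N'"
    using assms by blast
next
  fix X Y
  assume "\<exists>M N. X = erase (bt_c M) \<and> Y = erase (bt_c N) \<and> simple_term M \<and> beta_reds M N"
  then obtain M N where XY: "X = erase (bt_c M)" "Y = erase (bt_c N)" "simple_term M" "beta_reds M N" by blast
  from XY(4) obtain s where "(beta ^^ s) M N" by (auto simp: rtranclp_power)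
  from NS[OF XY(3) this] show "(X = Bot) = (Y = Bot) \<and>
       (X \<noteq> Bot \<longrightarrow> Y \<noteq> Bot \<longrightarrow> un_Nd1 X = un_Nd1 Y \<and> un_Nd2 X = un_Nd2 Y \<and> un_Nd3 X = un_Nd3 Y \<and>
         list_all2 (\<lambda>X Y. \<exists>M N. X = erase (bt_c M) \<and> Y = erase (bt_c N) \<and> simple_term M \<and> beta_reds M N)
           (un_Nd4 X) (un_Nd4 Y))"
  proof
    assume "\<not> has_hnf M \<and> \<not> has_hnf N"
    then show ?thesis using XY by (simp add: erase_def)
  next
    assume a: "has_hnf M \<and> has_hnf N \<and> hnf_nabs N = hnf_nabs M \<and> hnf_head N = hnf_head M \<and>
     hnf_steps N \<le> hnf_steps M \<and>
     (\<exists>cs. steps cs (hnf_args M) (hnf_args N) \<and> sum_list cs + (hnf_steps M - hnf_steps N) \<le> s) \<and>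
     (\<forall>A\<in>set (hnf_args M). simple_term A)"
    then obtain cs where cs: "steps cs (hnf_args M) (hnf_args N)" by blast
    have "list_all2 (\<lambda>X Y. \<exists>M N. X = erase (bt_c M) \<and> Y = erase (bt_c N) \<and> simple_term M \<and> beta_reds M N)
           (map erase (map bt_c (hnf_args M))) (map erase (map bt_c (hnf_args N)))"
    proof -
      have l: "length (hnf_args N) = length (hnf_args M)" using cs by (simp add: steps_def)
      have "\<forall>i<length (hnf_args M). simple_term (hnf_args M ! i) \<and> beta_reds (hnf_args M ! i) (hnf_args N ! i)"
        using cs a unfolding steps_def by (auto intro: relpowp_imp_rtranclp)
      then show ?thesis using l unfolding list_all2_conv_all_nth by auto
    qed
    have eM: "erase (bt_c M) = Nd () (hnf_nabs M) (hnf_head M) (map erase (map bt_c (hnf_args M)))"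
      using a by (simp add: bt_c.ctr erase_def)
    have eN: "erase (bt_c N) = Nd () (hnf_nabs N) (hnf_head N) (map erase (map bt_c (hnf_args N)))"
      using a by (simp add: bt_c.ctr erase_def)
    show ?thesis unfolding XY(1,2) eM eN using a \<open>list_all2 _ _ _\<close> by simp
  qed
qed



section \<open>Positions\<close>

lemma spine0_inv:
  "spine_at 0 ts p = Some x \<Longrightarrow>
   \<exists>i q. i < length ts \<and> p = replicate (length ts - Suc i) 1 @ 2 # q \<and> ann_at (ts ! i) q = Some x"
proof (induct p arbitrary: ts)
  case Nil then show ?case by simp
next
  case (Cons d p)
  have ne: "ts \<noteq> []" using Cons(2) by (auto split: if_splits)
  show ?case
  proof (cases "d = 1")
    case True
    with Cons(2) ne have "spine_at 0 (butlast ts) p = Some x" by simp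
    from Cons(1)[OF this] obtain i q where iq: "i < length (butlast ts)"
      "p = replicate (length (butlast ts) - Suc i) 1 @ 2 # q" "ann_at (butlast ts ! i) q = Some x" by blast
    have e: "length ts - Suc i = Suc (length (butlast ts) - Suc i)" using iq(1) by simp
    show ?thesis using iq True e
      by (intro exI[of _ i] exI[of _ q]) (auto simp: nth_butlast)
  next
    case False
    with Cons(2) ne have d2: "d = 2" "ann_at (last ts) p = Some x" by (auto split: if_splits)
    show ?thesis using d2 ne
      by (intro exI[of _ "length ts - 1"] exI[of _ p]) (auto simp: last_conv_nth)
  qed
qed

lemma spine0_at:
  "j < length ts \<Longrightarrow> spine_at 0 ts (replicate j 1 @ 2 # q) = ann_at (ts ! (length ts - Suc j)) q"
proof (induct j arbitrary: ts)
  case 0 then show ?case by (auto simp: last_conv_nth)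
next
  case (Suc j)
  then have "j < length (butlast ts)" by simp
  from Suc(1)[OF this] Suc(2) show ?case
    by (auto simp: nth_butlast)
qed

lemma spinen_at: "spine_at n ts (replicate n 0 @ p) = spine_at 0 ts p"
  by (induct n) auto

lemma spinen_inv: "spine_at n ts p = Some x \<Longrightarrow> \<exists>p'. p = replicate n 0 @ p' \<and> spine_at 0 ts p' = Some x"
proof (induct n arbitrary: p)
  case 0 then show ?case by simp
next
  case (Suc n)
  then obtain d p1 where p: "p = d # p1" by (cases p) auto
  with Suc(2) have "d = 0" "spine_at n ts p1 = Some x" by (auto split: if_splits)
  with Suc(1) p show ?case by fastforce
qed

definition pos :: "nat \<Rightarrow> nat \<Rightarrow> nat \<Rightarrow> nat list" where
  "pos n m i = replicate n 0 @ replicate (m - Suc i) 1 @ [2]"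

lemma ann_Nd: "ann_at (Nd a n y ts) p = (if p = [] then Some a else spine_at n ts p)"
  by (cases p) auto

lemma K1:
  assumes "ann_at (Nd a n y ts) p = Some x" "p \<noteq> []"
  shows "\<exists>i q. i < length ts \<and> p = pos n (length ts) i @ q \<and> ann_at (ts ! i) q = Some x"
proof -
  from assms have "spine_at n ts p = Some x" by (simp add: ann_Nd)
  from spinen_inv[OF this] obtain p' where "p = replicate n 0 @ p'" "spine_at 0 ts p' = Some x" by blast
  with spine0_inv[of ts p' x] show ?thesis unfolding pos_def by fastforce
qed

lemma K2:
  assumes "i < length ts"
  shows "ann_at (Nd a n y ts) (pos n (length ts) i @ q) = ann_at (ts ! i) q"
proof -
  have "length ts - Suc i < length ts" using assms by simp
  from spine0_at[OF this, of q] assms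
  have "spine_at 0 ts (replicate (length ts - Suc i) 1 @ 2 # q) = ann_at (ts ! i) q" by simp
  then show ?thesis unfolding pos_def by (simp add: ann_Nd spinen_at)
qed

definition D :: "'a bt \<Rightarrow> 'a bt \<Rightarrow> nat \<Rightarrow> nat list set" where
  "D T1 T2 L = {p. length p \<le> L \<and> ann_at T1 p \<noteq> ann_at T2 p}"

lemma D_Bot: "D Bot Bot L = {}" by (simp add: D_def)

lemma D_0: "D (Nd a1 n y ts1) (Nd a2 n' y' ts2) 0 \<subseteq> (if a1 = a2 then {} else {[]})"
  by (auto simp: D_def ann_Nd)

lemma D_Suc:
  assumes l: "length ts1 = m" "length ts2 = m"
  shows "D (Nd a1 n y ts1) (Nd a2 n y' ts2) (Suc L) \<subseteq>
    (if a1 = a2 then {} else {[]}) \<union> (\<Union>i<m. (\<lambda>q. pos n m i @ q) ` D (ts1 ! i) (ts2 ! i) L)"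
proof
  fix p assume p: "p \<in> D (Nd a1 n y ts1) (Nd a2 n y' ts2) (Suc L)"
  show "p \<in> (if a1 = a2 then {} else {[]}) \<union> (\<Union>i<m. (\<lambda>q. pos n m i @ q) ` D (ts1 ! i) (ts2 ! i) L)"
  proof (cases "p = []")
    case True then show ?thesis using p by (auto simp: D_def)
  next
    case False
    from p have ne: "ann_at (Nd a1 n y ts1) p \<noteq> ann_at (Nd a2 n y' ts2) p" and len: "length p \<le> Suc L"
      by (auto simp: D_def)
    have "\<exists>i q. i < m \<and> p = pos n m i @ q"
    proof (cases "ann_at (Nd a1 n y ts1) p")
      case None
      with ne obtain x where "ann_at (Nd a2 n y' ts2) p = Some x" by (cases "ann_at (Nd a2 n y' ts2) p") auto
      from K1[OF this False] l show ?thesis by (auto simp: ann_Nd)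
    next
      case (Some x)
      from K1[OF this False] l show ?thesis by auto
    qed
    then obtain i q where iq: "i < m" "p = pos n m i @ q" by blast
    have "ann_at (Nd a1 n y ts1) p = ann_at (ts1 ! i) q" using K2[of i ts1 a1 n y q] iq l by simp
    moreover have "ann_at (Nd a2 n y' ts2) p = ann_at (ts2 ! i) q"
    proof -
      have "ann_at (Nd a2 n y' ts2) p = spine_at n ts2 p" using False by (simp add: ann_Nd)
      also have "\<dots> = ann_at (Nd a2 n y ts2) p" using False by (simp add: ann_Nd)
      also have "\<dots> = ann_at (ts2 ! i) q" using K2[of i ts2 a2 n y q] iq l by simp
      finally show ?thesis .
    qed
    moreover have "length q \<le> L" using len iq(2) by (simp add: pos_def)
    ultimately have "q \<in> D (ts1 ! i) (ts2 ! i) L" using ne by (simp add: D_def)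
    then show ?thesis using iq by blast
  qed
qed


section \<open>Counting differences\<close>

lemma card_D:
  "simple_term M \<Longrightarrow> (beta ^^ s) M N \<Longrightarrow> finite (D (bt_c M) (bt_c N) L) \<and> card (D (bt_c M) (bt_c N) L) \<le> s"
proof (induct L arbitrary: M N s)
  case 0
  from NS[OF 0(1,2)] show ?case
  proof
    assume "\<not> has_hnf M \<and> \<not> has_hnf N"
    then show ?thesis by (simp add: bt_c.ctr D_Bot)
  next
    assume a: "has_hnf M \<and> has_hnf N \<and> hnf_nabs N = hnf_nabs M \<and> hnf_head N = hnf_head M \<and>
     hnf_steps N \<le> hnf_steps M \<and>
     (\<exists>cs. steps cs (hnf_args M) (hnf_args N) \<and> sum_list cs + (hnf_steps M - hnf_steps N) \<le> s) \<and>
     (\<forall>A\<in>set (hnf_args M). simple_term A)"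
    then obtain cs where cs: "sum_list cs + (hnf_steps M - hnf_steps N) \<le> s" by blast
    have sub: "D (bt_c M) (bt_c N) 0 \<subseteq> (if hnf_steps M = hnf_steps N then {} else {[]})"
      using a D_0[of "hnf_steps M" "hnf_nabs M" "hnf_head M" "map bt_c (hnf_args M)" "hnf_steps N" "hnf_nabs N" "hnf_head N" "map bt_c (hnf_args N)"]
      by (simp add: bt_c.ctr)
    then have "finite (D (bt_c M) (bt_c N) 0)" by (rule finite_subset) simp
    moreover have "card (D (bt_c M) (bt_c N) 0) \<le> card (if hnf_steps M = hnf_steps N then {} else {[]} :: nat list set)"
      by (rule card_mono[OF _ sub]) simp
    ultimately show ?thesis using cs a by (auto split: if_splits)
  qed
next
  case (Suc L)
  from NS[OF Suc(2,3)] show ?case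
  proof
    assume "\<not> has_hnf M \<and> \<not> has_hnf N"
    then show ?thesis by (simp add: bt_c.ctr D_Bot)
  next
    assume a: "has_hnf M \<and> has_hnf N \<and> hnf_nabs N = hnf_nabs M \<and> hnf_head N = hnf_head M \<and>
     hnf_steps N \<le> hnf_steps M \<and>
     (\<exists>cs. steps cs (hnf_args M) (hnf_args N) \<and> sum_list cs + (hnf_steps M - hnf_steps N) \<le> s) \<and>
     (\<forall>A\<in>set (hnf_args M). simple_term A)"
    then obtain cs where cs: "steps cs (hnf_args M) (hnf_args N)" "sum_list cs + (hnf_steps M - hnf_steps N) \<le> s"
      by blast
    define m where "m = length (hnf_args M)"
    define R where "R = (if hnf_steps M = hnf_steps N then {} else {[]} :: nat list set)"
    define C where "C i = D (bt_c (hnf_args M ! i)) (bt_c (hnf_args N ! i)) L" for i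
    have lens: "length (hnf_args N) = m" "length cs = m" using cs(1) by (auto simp: steps_def m_def)
    have eM: "bt_c M = Nd (hnf_steps M) (hnf_nabs M) (hnf_head M) (map bt_c (hnf_args M))"
      using a by (simp add: bt_c.ctr)
    have eN: "bt_c N = Nd (hnf_steps N) (hnf_nabs M) (hnf_head M) (map bt_c (hnf_args N))"
      using a by (simp add: bt_c.ctr)
    have sub: "D (bt_c M) (bt_c N) (Suc L) \<subseteq> R \<union> (\<Union>i<m. (\<lambda>q. pos (hnf_nabs M) m i @ q) ` C i)"
      unfolding eM eN R_def C_def using D_Suc[of "map bt_c (hnf_args M)" m "map bt_c (hnf_args N)"
          "hnf_steps M" "hnf_nabs M" "hnf_head M" "hnf_steps N" "hnf_head M" L] lens
      by (simp add: m_def)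
    have ch: "finite (C i) \<and> card (C i) \<le> cs ! i" if "i < m" for i
    proof -
      have "simple_term (hnf_args M ! i)" using a that by (simp add: m_def)
      moreover have "(beta ^^ (cs ! i)) (hnf_args M ! i) (hnf_args N ! i)" using cs(1) that
        by (simp add: steps_def m_def)
      ultimately show ?thesis unfolding C_def by (rule Suc(1))
    qed
    have fin: "finite (R \<union> (\<Union>i<m. (\<lambda>q. pos (hnf_nabs M) m i @ q) ` C i))"
      using ch by (simp add: R_def)
    have "card (R \<union> (\<Union>i<m. (\<lambda>q. pos (hnf_nabs M) m i @ q) ` C i))
        \<le> card R + card (\<Union>i<m. (\<lambda>q. pos (hnf_nabs M) m i @ q) ` C i)" by (rule card_Un_le)
    also have "card (\<Union>i<m. (\<lambda>q. pos (hnf_nabs M) m i @ q) ` C i) \<le> (\<Sum>i<m. card ((\<lambda>q. pos (hnf_nabs M) m i @ q) ` C i))"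
      by (rule card_UN_le) simp
    also have "\<dots> \<le> (\<Sum>i<m. cs ! i)"
    proof (rule sum_mono)
      fix i assume "i \<in> {..<m}"
      then have "card (C i) \<le> cs ! i" using ch by simp
      then show "card ((\<lambda>q. pos (hnf_nabs M) m i @ q) ` C i) \<le> cs ! i"
        using card_image_le[of "C i" "\<lambda>q. pos (hnf_nabs M) m i @ q"] ch \<open>i \<in> {..<m}\<close> by (meson le_trans lessThan_iff)
    qed
    also have "(\<Sum>i<m. cs ! i) = sum_list cs" using lens by (simp add: sum_list_sum_nth atLeast0LessThan)
    finally have "card (R \<union> (\<Union>i<m. (\<lambda>q. pos (hnf_nabs M) m i @ q) ` C i)) \<le> card R + sum_list cs"
      by simp
    moreover have "card R \<le> hnf_steps M - hnf_steps N" using a by (auto simp: R_def)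
    ultimately have "card (R \<union> (\<Union>i<m. (\<lambda>q. pos (hnf_nabs M) m i @ q) ` C i)) \<le> s" using cs(2) by linarith
    with card_mono[OF fin sub] finite_subset[OF sub fin] show ?thesis by simp
  qed
qed

lemma ann_eventually:
  assumes "simple_term M" "(beta ^^ s) M N"
  shows "\<exists>l. \<forall>p. length p \<ge> l \<longrightarrow> ann_at (bt_c M) p = ann_at (bt_c N) p"
proof -
  define A where "A = {p. ann_at (bt_c M) p \<noteq> ann_at (bt_c N) p}"
  have "finite A"
  proof (rule ccontr)
    assume "\<not> finite A"
    from infinite_arbitrarily_large[OF this, of "Suc s"] obtain F where
      F: "finite F" "card F = Suc s" "F \<subseteq> A" by blast
    define L where "L = Max (length ` F)"
    have "F \<subseteq> D (bt_c M) (bt_c N) L"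
      using F unfolding D_def A_def L_def by (auto intro: Max_ge)
    then have "card F \<le> card (D (bt_c M) (bt_c N) L)"
      using card_D[OF assms] by (intro card_mono) auto
    with card_D[OF assms, of L] F(2) show False by simp
  qed
  then have "finite (length ` A)" by simp
  then obtain b where b: "\<forall>x\<in>length ` A. x \<le> b" using finite_nat_set_iff_bounded_le by blast
  show ?thesis
  proof (intro exI[of _ "Suc b"] allI impI)
    fix p :: "nat list" assume "Suc b \<le> length p"
    then have "p \<notin> A" using b by force
    then show "ann_at (bt_c M) p = ann_at (bt_c N) p" by (simp add: A_def)
  qed
qed

theorem proposition4p9:
  assumes "simple_term M"
    and "beta_reds M N"
  shows "ev_eq (bt_c M) (bt_c N)"
proof -
  from assms(2) obtain s where s: "(beta ^^ s) M N" by (auto simp: rtranclp_power)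
  show ?thesis unfolding ev_eq_def
    using erase_eq[OF assms] ann_eventually[OF assms(1) s] by blast
qed

end
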